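(* Let $n\in\mathbb{Z}$, $y_0>0$, and define for $x\in\mathbb{R}$, $y>0$ \[ G(x,y)=\frac{1}{2\pi}\log\frac{x^2+(y+y_0)^2}{x^2+(y-y_0)^2},\qquad p_n(x,y)=\frac{1}{\pi}\,\frac{y}{(x-2\pi n)^2+y^2}. \] Then for all $x\in\mathbb{R}$ and $y>0$, \[ \lim_{y_0\to\infty}\frac{G(x,y)}{p_n(0,y_0)}=2y, \] and if $y_0\ge 2\pi|n|$, then \[ \frac{G(x,y)}{p_n(0,y_0)}\le y\,g(y/y_0),\qquad\text{where } g(t)=t^{-1}\log\bigl(1+4t(t-1)^{-2}\bigr). \]
   Context: $G$ is the Green function of the upper half-plane (for $-\tfrac12\Delta$) with pole at $(0,y_0)$; $p_n$ is the Poisson kernel of the upper half-plane with pole at $2\pi n$. *)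

theory Defs
  imports Complex_Main
begin

definition greenG :: "real \<Rightarrow> real \<Rightarrow> real \<Rightarrow> real" where
  "greenG y0 x y = (1 / (2 * pi)) * ln ((x^2 + (y + y0)^2) / (x^2 + (y - y0)^2))"

definition poissonP :: "int \<Rightarrow> real \<Rightarrow> real \<Rightarrow> real" where
  "poissonP n x y = (1 / pi) * (y / ((x - 2 * pi * of_int n)^2 + y^2))"

definition gfun :: "real \<Rightarrow> real" where
  "gfun t = (1 / t) * ln (1 + 4 * t / (t - 1)^2)"

end

theory Submission
  imports Defs "HOL-Real_Asymp.Real_Asymp"
begin

lemma ineq_part:
  fixes n :: int and x y y0 :: real
  assumes y: "y > 0" and y0: "y0 > 0" and big: "y0 \<ge> 2 * pi * \<bar>of_int n\<bar>" and ne: "y \<noteq> y0"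
  shows "greenG y0 x y / poissonP n 0 y0 \<le> y * gfun (y / y0)"
proof -
  define A where "A = (2 * pi * of_int n)^2"
  define R where "R = (x^2 + (y + y0)^2) / (x^2 + (y - y0)^2)"
  have d0: "(y - y0)^2 > 0" using ne by simp
  have den: "x^2 + (y - y0)^2 > 0" using d0 by (simp add: add_nonneg_pos)
  have num_ge: "x^2 + (y + y0)^2 \<ge> x^2 + (y - y0)^2" using y y0 by (simp add: power2_eq_square algebra_simps)
  have R1: "R \<ge> 1" unfolding R_def using den num_ge by simp
  have lnR: "ln R \<ge> 0" using R1 by simp
  have A_le: "A \<le> y0^2"
  proof -
    have "\<bar>2 * pi * of_int n\<bar> \<le> y0" using big by (simp add: abs_mult)
    hence "\<bar>2 * pi * of_int n\<bar>^2 \<le> y0^2" by (rule power_mono) simp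
    thus ?thesis unfolding A_def by simp
  qed
  have A0: "A \<ge> 0" unfolding A_def by simp
  have lhs: "greenG y0 x y / poissonP n 0 y0 = ln R * (A + y0^2) / (2 * y0)"
    unfolding greenG_def poissonP_def R_def A_def using y0
    by (simp add: field_simps add_nonneg_pos)
  have "ln R * (A + y0^2) / (2 * y0) \<le> ln R * (2*y0^2) / (2*y0)"
    using lnR A_le y0 by (intro divide_right_mono mult_left_mono) auto
  also have "\<dots> = y0 * ln R" using y0 by (simp add: power2_eq_square)
  also have "R \<le> 1 + 4 * y * y0 / (y - y0)^2"
  proof -
    have "R \<le> (y + y0)^2 / (y - y0)^2"
      unfolding R_def using den d0 num_ge
      by (simp add: divide_simps) (simp add: algebra_simps mult_left_mono)
    also have "\<dots> = 1 + 4 * y * y0 / (y - y0)^2" using d0 by (simp add: field_simps power2_eq_square)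
    finally show ?thesis .
  qed
  hence "y0 * ln R \<le> y0 * ln (1 + 4 * y * y0 / (y - y0)^2)"
    using y0 R1 by (intro mult_left_mono) auto
  also have "\<dots> = y * gfun (y / y0)"
  proof -
    have "4 * (y / y0) / (y / y0 - 1)^2 = 4 * y * y0 / (y - y0)^2"
      using y0 by (simp add: field_simps power2_eq_square)
    thus ?thesis unfolding gfun_def using y y0 by simp
  qed
  finally show ?thesis using lhs by simp
qed

theorem lemma3p3:
  fixes n :: int and x y :: real
  assumes "y > 0"
  shows "((\<lambda>y0. greenG y0 x y / poissonP n 0 y0) \<longlongrightarrow> 2 * y) at_top \<and>
         (\<forall>y0. y0 > 0 \<longrightarrow> y0 \<ge> 2 * pi * \<bar>of_int n\<bar> \<longrightarrow> y \<noteq> y0 \<longrightarrow>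
           greenG y0 x y / poissonP n 0 y0 \<le> y * gfun (y / y0))"
proof
  show "((\<lambda>y0. greenG y0 x y / poissonP n 0 y0) \<longlongrightarrow> 2 * y) at_top"
    using assms unfolding greenG_def poissonP_def by real_asymp
  show "\<forall>y0. y0 > 0 \<longrightarrow> y0 \<ge> 2 * pi * \<bar>of_int n\<bar> \<longrightarrow> y \<noteq> y0 \<longrightarrow>
           greenG y0 x y / poissonP n 0 y0 \<le> y * gfun (y / y0)"
    using ineq_part assms by blast
qed

end
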